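(* Let $\Gamma=\mathrm{Cay}(G,S)$ be a connected bipartite Cayley graph on $2n$ vertices with valency $k$, and let $H$ be the part of this bipartite graph containing the identity element (a normal subgroup of index $2$ in $G$). If $n$ is not divisible by $4$ and $0$ is not an eigenvalue of (the adjacency matrix of) $\Gamma$, then there is an involution $a\in G\setminus H$, so that $G=H\rtimes\langle a\rangle\cong H\rtimes\mathbb{Z}_2$.
   Context: For a finite group $G$ with identity $e$ and a subset $S\subseteq G\setminus\{e\}$ with $S=S^{-1}$, the Cayley graph $\mathrm{Cay}(G,S)$ has vertex set $G$, two vertices $a,b$ being adjacent iff $ab^{-1}\in S$. *)

theory Defs
  imports "HOL-Algebra.Algebra" "Jordan_Normal_Form.Char_Poly"
begin

definition cay_edge :: "('a, 'b) monoid_scheme \<Rightarrow> 'a set \<Rightarrow> 'a \<Rightarrow> 'a \<Rightarrow> bool" where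
  "cay_edge G S a b \<longleftrightarrow> a \<in> carrier G \<and> b \<in> carrier G \<and> a \<otimes>\<^bsub>G\<^esub> inv\<^bsub>G\<^esub> b \<in> S"

definition cayley_set :: "('a, 'b) monoid_scheme \<Rightarrow> 'a set \<Rightarrow> bool" where
  "cayley_set G S \<longleftrightarrow> S \<subseteq> carrier G - {\<one>\<^bsub>G\<^esub>} \<and> (\<forall>s\<in>S. inv\<^bsub>G\<^esub> s \<in> S)"

definition cayley_connected :: "('a, 'b) monoid_scheme \<Rightarrow> 'a set \<Rightarrow> bool" where
  "cayley_connected G S \<longleftrightarrow> (\<forall>x\<in>carrier G. \<forall>y\<in>carrier G. rtranclp (cay_edge G S) x y)"

definition cayley_bipartition :: "('a, 'b) monoid_scheme \<Rightarrow> 'a set \<Rightarrow> 'a set \<Rightarrow> bool" where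
  "cayley_bipartition G S P \<longleftrightarrow> P \<subseteq> carrier G \<and>
     (\<forall>u v. cay_edge G S u v \<longrightarrow> (u \<in> P \<longleftrightarrow> v \<notin> P))"

definition cay_adj_mat :: "('a, 'b) monoid_scheme \<Rightarrow> 'a set \<Rightarrow> (nat \<Rightarrow> 'a) \<Rightarrow> real mat" where
  "cay_adj_mat G S idx = mat (card (carrier G)) (card (carrier G))
     (\<lambda>(i, j). if cay_edge G S (idx i) (idx j) then 1 else 0)"

end

theory Submission
  imports Defs
begin

lemma fpf_sign:
  assumes "finite A" "p permutes A" "\<And>x. x \<in> A \<Longrightarrow> p x \<noteq> x" "\<And>x. x \<in> A \<Longrightarrow> p (p x) = x"
  shows "sign p = (-1) ^ (card A div 2) \<and> even (card A)"
  using assms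
proof (induction "card A" arbitrary: A p rule: less_induct)
  case less
  show ?case
  proof (cases "A = {}")
    case True
    then have "p = id" using less.prems(2) by simp
    then show ?thesis using True by simp
  next
    case False
    then obtain a where a: "a \<in> A" by blast
    define b where "b = p a"
    have b: "b \<in> A" "b \<noteq> a" "p b = a"
      using permutes_in_image[OF less.prems(2)] a less.prems(3,4) b_def by auto
    define q where "q = transpose a b \<circ> p"
    define B where "B = A - {a, b}"
    have qA: "q permutes A" unfolding q_def
      by (rule permutes_compose[OF less.prems(2) permutes_swap_id[OF a b(1)]])
    have qa: "q a = a" "q b = b" using b by (auto simp: q_def b_def)
    have qB: "q permutes B"
      by (rule permutes_superset[OF qA]) (use qa in \<open>auto simp: B_def\<close>)
    have qx: "q x = p x" if "x \<in> B" for x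
    proof -
      have x: "x \<in> A" "x \<noteq> a" "x \<noteq> b" using that B_def by auto
      have "p x \<noteq> a"
      proof
        assume "p x = a" then have "p (p x) = p a" by simp
        then show False using less.prems(4)[OF x(1)] x b_def by simp
      qed
      moreover have "p x \<noteq> b"
      proof
        assume "p x = b" then have "p (p x) = p b" by simp
        then show False using less.prems(4)[OF x(1)] x b by simp
      qed
      ultimately show ?thesis by (simp add: q_def transpose_def)
    qed
    have cB: "card B = card A - 2" using a b less.prems(1) by (simp add: B_def card_Diff_subset)
    have cA: "card A \<ge> 2"
    proof -
      have "{a, b} \<subseteq> A" using a b by auto
      then have "card {a,b} \<le> card A" using less.prems(1) card_mono by blast
      then show ?thesis using b by simp
    qed
    have IH: "sign q = (-1) ^ (card B div 2) \<and> even (card B)"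
      apply (rule less.hyps[of B q])
      using cB cA apply simp
      using less.prems(1) apply (simp add: B_def)
      apply (rule qB)
      using qx less.prems(3) B_def apply (simp)
    proof -
      fix x assume x: "x \<in> B"
      have "q x \<in> B" using permutes_in_image[OF qB] x by simp
      then show "q (q x) = x" using qx x less.prems(4)[of x] B_def by simp
    qed
    have pq: "p = transpose a b \<circ> q" unfolding q_def by (simp add: comp_assoc[symmetric])
    have "permutation q" using qB less.prems(1) B_def permutation_permutes by blast
    then have "sign p = - sign q" using pq b(2) by (simp add: sign_compose permutation_swap_id sign_swap_id)
    moreover have "card A div 2 = Suc (card B div 2)" "even (card A)" using cB cA IH by auto
    ultimately show ?thesis using IH by simp
  qed
qed

context group begin

lemma edge_transl:
  assumes "cay_edge G S u v" "y \<in> carrier G"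
  shows "cay_edge G S (u \<otimes> y) (v \<otimes> y)"
proof -
  have u: "u \<in> carrier G" and v: "v \<in> carrier G" and e: "u \<otimes> inv v \<in> S"
    using assms(1) by (auto simp: cay_edge_def)
  have "u \<otimes> y \<otimes> inv (v \<otimes> y) = u \<otimes> inv v"
    using u v assms(2) by (simp add: inv_mult_group m_assoc) (metis inv_closed l_one m_assoc r_inv)
  then show ?thesis using u v e assms(2) by (simp add: cay_edge_def)
qed

lemma bip_agree:
  assumes conn: "cayley_connected G S" and P: "cayley_bipartition G S P"
    and Q: "cayley_bipartition G S Q" and z: "z \<in> carrier G" and x: "x \<in> carrier G"
  shows "(z \<in> P \<longleftrightarrow> z \<in> Q) \<longleftrightarrow> (x \<in> P \<longleftrightarrow> x \<in> Q)"
proof -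
  have "(cay_edge G S)\<^sup>*\<^sup>* z x" using conn z x by (simp add: cayley_connected_def)
  then show ?thesis
  proof (induction rule: rtranclp_induct)
    case base then show ?case by simp
  next
    case (step y x') then show ?case using P Q unfolding cayley_bipartition_def by blast
  qed
qed

lemma bip_transl:
  assumes "cayley_bipartition G S H" "y \<in> carrier G"
  shows "cayley_bipartition G S {u \<in> carrier G. u \<otimes> y \<in> H}"
  unfolding cayley_bipartition_def
proof (intro conjI allI impI)
  fix u v assume e: "cay_edge G S u v"
  then have "u \<in> carrier G" "v \<in> carrier G" by (auto simp: cay_edge_def)
  moreover have "cay_edge G S (u \<otimes> y) (v \<otimes> y)" using edge_transl[OF e assms(2)] .
  ultimately show "(u \<in> {u \<in> carrier G. u \<otimes> y \<in> H}) = (v \<notin> {u \<in> carrier G. u \<otimes> y \<in> H})"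
    using assms(1) unfolding cayley_bipartition_def by blast
qed auto

lemma parity:
  assumes conn: "cayley_connected G S" and bip: "cayley_bipartition G S H" and one: "\<one> \<in> H"
    and x: "x \<in> carrier G" and y: "y \<in> carrier G"
  shows "x \<otimes> y \<in> H \<longleftrightarrow> (x \<in> H \<longleftrightarrow> y \<in> H)"
  using bip_agree[OF conn bip_transl[OF bip y] bip one_closed x] x y one by auto

end

context group begin

lemma main_aux:
  fixes S H :: "'a set" and n k :: nat and idx :: "nat \<Rightarrow> 'a"
  assumes "finite (carrier G)"
    and "cayley_set G S"
    and "cayley_connected G S"
    and "cayley_bipartition G S H" and "\<one> \<in> H"
    and "card (carrier G) = 2 * n"
    and "bij_betw idx {0..<card (carrier G)} (carrier G)"
    and "\<not> 4 dvd n"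
    and "\<not> eigenvalue (cay_adj_mat G S idx) 0"
  shows "\<exists>a \<in> carrier G - H. a \<otimes> a = \<one> \<and> a \<noteq> \<one>
           \<and> H \<lhd> G \<and> H \<inter> {\<one>, a} = {\<one>}
           \<and> H <#> {\<one>, a} = carrier G"
proof -
  note fin = assms(1) and conn = assms(3) and bip = assms(4) and one = assms(5)
  have Hsub: "H \<subseteq> carrier G" using bip by (simp add: cayley_bipartition_def)
  have par: "\<And>x y. x \<in> carrier G \<Longrightarrow> y \<in> carrier G \<Longrightarrow> x \<otimes> y \<in> H \<longleftrightarrow> (x \<in> H \<longleftrightarrow> y \<in> H)"
    using parity[OF conn bip one] by blast
  have invH: "\<And>x. x \<in> carrier G \<Longrightarrow> inv x \<in> H \<longleftrightarrow> x \<in> H"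
    using par one by (metis inv_closed r_inv)
  have Scar: "S \<subseteq> carrier G" and Sinv: "\<And>s. s \<in> S \<Longrightarrow> inv s \<in> S"
    using assms(2) by (auto simp: cayley_set_def)
  have SnotH: "\<And>s. s \<in> S \<Longrightarrow> s \<notin> H"
  proof -
    fix s assume s: "s \<in> S"
    then have "cay_edge G S s \<one>" using Scar by (auto simp: cay_edge_def)
    then show "s \<notin> H" using bip one by (simp add: cayley_bipartition_def)
  qed
  have sub: "subgroup H G"
  proof (rule subgroupI)
    show "\<And>a b. a \<in> H \<Longrightarrow> b \<in> H \<Longrightarrow> a \<otimes> b \<in> H" using par Hsub by blast
  qed (use Hsub one invH in \<open>auto\<close>)
  have nrm: "H \<lhd> G"
    unfolding normal_inv_iff
  proof (intro conjI sub ballI)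
    fix x h assume x: "x \<in> carrier G" and h: "h \<in> H"
    then have hc: "h \<in> carrier G" using Hsub by auto
    show "x \<otimes> h \<otimes> inv x \<in> H" using par[of "x \<otimes> h" "inv x"] par[of x h] invH[of x] x hc h by auto
  qed
  have finS: "finite S" using Scar fin finite_subset by blast
  have finH: "finite H" using Hsub fin finite_subset by blast
  obtain s0 where s0: "s0 \<in> S"
  proof -
    have "card (carrier G) \<noteq> 0" using fin one_closed by auto
    then have "n \<ge> 1" using assms(6) by simp
    then have "\<not> carrier G \<subseteq> {\<one>}" using assms(6) card_mono[of "{\<one>}" "carrier G"] by auto
    then obtain x where x: "x \<in> carrier G" "x \<noteq> \<one>" by auto
    have "(cay_edge G S)\<^sup>*\<^sup>* \<one> x" using conn x by (simp add: cayley_connected_def)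
    then obtain y where "cay_edge G S y x" using x(2) by (metis rtranclp.cases)
    then have "y \<otimes> inv x \<in> S" by (simp add: cay_edge_def)
    then show ?thesis using that by blast
  qed
  have s0c: "s0 \<in> carrier G" "s0 \<notin> H" using s0 Scar SnotH by auto
  have cardH: "card H = n"
  proof -
    have "bij_betw (\<lambda>x. x \<otimes> s0) H (carrier G - H)"
    proof (rule bij_betw_byWitness[where f' = "\<lambda>y. y \<otimes> inv s0"])
      show "\<forall>a\<in>H. a \<otimes> s0 \<otimes> inv s0 = a" using Hsub s0c by (auto simp: m_assoc)
      show "\<forall>a\<in>carrier G - H. a \<otimes> inv s0 \<otimes> s0 = a" using s0c by (auto simp: m_assoc)
      show "(\<lambda>x. x \<otimes> s0) ` H \<subseteq> carrier G - H" using Hsub s0c par by auto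
      show "(\<lambda>y. y \<otimes> inv s0) ` (carrier G - H) \<subseteq> H" using s0c par invH by auto
    qed
    then have "card H = card (carrier G - H)" by (rule bij_betw_same_card)
    moreover have "card (carrier G - H) = card (carrier G) - card H" using Hsub finH by (simp add: card_Diff_subset)
    moreover have "card H \<le> card (carrier G)" using Hsub fin card_mono by blast
    ultimately show ?thesis using assms(6) by linarith
  qed
  have invol: "\<exists>a\<in>carrier G - H. a \<otimes> a = \<one> \<and> a \<noteq> \<one>"
  proof (rule ccontr)
    assume noinv: "\<not> ?thesis"
    have HC: "\<And>x. x \<in> H \<Longrightarrow> x \<in> carrier G" using Hsub by auto
    define lm where "lm g = (\<lambda>x. if x \<in> H then g \<otimes> x else x)" for g
    have lm_perm: "lm g permutes H" if g: "g \<in> H" for g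
    proof (rule bij_imp_permutes)
      have gc: "g \<in> carrier G" using g Hsub by auto
      show "bij_betw (lm g) H H"
      proof (rule bij_betw_byWitness[where f' = "lm (inv g)"])
        show "\<forall>a\<in>H. lm (inv g) (lm g a) = a"
          using gc g Hsub par by (auto simp: lm_def m_assoc[symmetric] HC)
        show "\<forall>a\<in>H. lm g (lm (inv g) a) = a"
          using gc g Hsub par invH by (auto simp: lm_def m_assoc[symmetric] HC)
        show "lm g ` H \<subseteq> H" using gc g Hsub par by (auto simp: lm_def)
        show "lm (inv g) ` H \<subseteq> H" using gc g Hsub par invH by (auto simp: lm_def)
      qed
      show "\<And>x. x \<notin> H \<Longrightarrow> lm g x = x" by (simp add: lm_def)
    qed
    have lm_perm': "permutation (lm g)" if "g \<in> H" for g
      using lm_perm[OF that] finH permutation_permutes by blast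
    have lm_mult: "lm (g \<otimes> h) = lm g \<circ> lm h" if "g \<in> H" "h \<in> H" for g h
    proof
      fix x show "lm (g \<otimes> h) x = (lm g \<circ> lm h) x"
        using that Hsub par by (auto simp: lm_def m_assoc HC)
    qed
    have sg_mult: "sign (lm (g \<otimes> h)) = sign (lm g) * sign (lm h)" if "g \<in> H" "h \<in> H" for g h
      using lm_mult[OF that] lm_perm'[OF that(1)] lm_perm'[OF that(2)] by (simp add: sign_compose)
    have lm_one: "lm \<one> = (\<lambda>x. x)"
    proof
      fix x show "lm \<one> x = x" using Hsub by (auto simp: lm_def)
    qed
    have powH: "g [^] (j::nat) \<in> H" if "g \<in> H" for g j
      by (induction j) (use that one par HC in auto)
    have sg_pow: "sign (lm (g [^] (j::nat))) = sign (lm g) ^ j" if g: "g \<in> H" for g j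
    proof (induction j)
      case 0 then show ?case by (simp add: lm_one)
    next
      case (Suc j)
      then show ?case using sg_mult[OF powH[OF g] g] by simp
    qed
    have sg_fpf: "sign (lm w) = (-1) ^ (card H div 2) \<and> even (card H)"
      if w: "w \<in> H" "w \<otimes> w = \<one>" "w \<noteq> \<one>" for w
    proof (rule fpf_sign[OF finH lm_perm[OF w(1)]])
      have wc: "w \<in> carrier G" using w Hsub by auto
      fix x assume x: "x \<in> H"
      then have xc: "x \<in> carrier G" using Hsub by auto
      show "lm w x \<noteq> x"
      proof
        assume "lm w x = x"
        then have "w \<otimes> x = \<one> \<otimes> x" using x xc by (simp add: lm_def)
        then show False using w wc xc r_cancel by blast
      qed
      have "w \<otimes> x \<in> H" using par wc xc w x by auto
      then show "lm w (lm w x) = x" using x xc wc w by (simp add: lm_def m_assoc[symmetric])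
    qed
    have n_half: "odd (n div 2)" if "even n"
      using that assms(8) by (metis dvd_mult_div_cancel even_two_times_div_two mult_dvd_mono dvd_refl numeral_Bit0 numeral_One one_add_one mult_2_right dvd_triv_left nat_mult_dvd_cancel_disj)
    have key: "sign (lm (s \<otimes> s)) = -1" if s: "s \<in> S" for s
    proof -
      have sc: "s \<in> carrier G" and sH: "s \<notin> H" using s Scar SnotH by auto
      have pw: "s [^] (j::nat) \<in> H \<longleftrightarrow> even j" for j
      proof (induction j)
        case 0 then show ?case using one by simp
      next
        case (Suc j) then show ?case using par[of "s [^] j" s] sc sH by simp
      qed
      define d where "d = ord s"
      have d1: "d \<ge> 1" using ord_ge_1[OF fin sc] d_def by simp
      have "s [^] d = \<one>" using sc d_def by simp
      then have evd: "even d" using pw[of d] one by simp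
      define w where "w = s [^] (d div 2)"
      have wc: "w \<in> carrier G" using sc w_def by simp
      have ww: "w \<otimes> w = \<one>"
      proof -
        have "d div 2 + d div 2 = d" using evd by auto
        then show ?thesis using sc \<open>s [^] d = \<one>\<close> by (simp add: w_def nat_pow_mult)
      qed
      have w1: "w \<noteq> \<one>"
      proof
        assume "w = \<one>"
        then have "d dvd d div 2" using pow_eq_id[OF sc] w_def d_def by simp
        moreover have "d div 2 < d" using d1 by simp
        ultimately have "d div 2 = 0" using dvd_imp_le[of d "d div 2"] by (cases "d div 2 = 0") auto
        then show False using evd d1 by auto
      qed
      have wH: "w \<in> H" using noinv wc ww w1 by blast
      then have ev2: "even (d div 2)" using pw w_def by simp
      have ssH: "s \<otimes> s \<in> H" using par sc sH by simp
      have "w = (s [^] (2::nat)) [^] (d div 4)"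
      proof -
        have "2 * (d div 4) = d div 2" using ev2 by presburger
        then show ?thesis using sc by (simp add: w_def nat_pow_pow)
      qed
      moreover have "s [^] (2::nat) = s \<otimes> s" using sc by (simp add: numeral_2_eq_2)
      ultimately have "sign (lm w) = sign (lm (s \<otimes> s)) ^ (d div 4)"
        using sg_pow[OF ssH] by simp
      moreover have "sign (lm w) = -1"
        using sg_fpf[OF wH ww w1] cardH n_half by simp
      ultimately show ?thesis by (cases "sign (lm (s \<otimes> s)) = 1") (auto simp: sign_def split: if_splits)
    qed
    define eps where "eps x = (if x \<in> H then real_of_int (sign (lm x)) else 0)" for x
    have anti: "eps (s \<otimes> x) = - eps (inv s \<otimes> x)" if s: "s \<in> S" and x: "x \<in> carrier G" "x \<notin> H" for s x
    proof -
      have sc: "s \<in> carrier G" and sH: "s \<notin> H" using s Scar SnotH by auto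
      have h1: "s \<otimes> x \<in> H" and h2: "inv s \<otimes> x \<in> H" and h3: "s \<otimes> s \<in> H"
        using par sc sH x invH by auto
      have "s \<otimes> x = (s \<otimes> s) \<otimes> (inv s \<otimes> x)" using sc x
        by (simp add: m_assoc) (metis inv_closed l_one m_assoc r_inv)
      then have "sign (lm (s \<otimes> x)) = - sign (lm (inv s \<otimes> x))"
        using sg_mult[OF h3 h2] key[OF s] by simp
      then show ?thesis using h1 h2 by (simp add: eps_def)
    qed
    have sumzero: "(\<Sum>s\<in>S. eps (inv s \<otimes> x)) = 0" if x: "x \<in> carrier G" for x
    proof (cases "x \<in> H")
      case True
      have "eps (inv s \<otimes> x) = 0" if "s \<in> S" for s
        using that Scar SnotH par[of "inv s" x] invH[of s] x True by (auto simp: eps_def)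
      then show ?thesis by simp
    next
      case False
      have "(\<Sum>s\<in>S. eps (inv s \<otimes> x)) = (\<Sum>s\<in>S. eps (inv (inv s) \<otimes> x))"
      proof (rule sum.reindex_bij_betw[symmetric])
        show "bij_betw (\<lambda>s. inv s) S S"
          by (rule bij_betw_byWitness[where f' = "\<lambda>s. inv s"]) (use Scar Sinv in auto)
      qed
      also have "\<dots> = (\<Sum>s\<in>S. eps (s \<otimes> x))" using Scar by (intro sum.cong) auto
      also have "\<dots> = - (\<Sum>s\<in>S. eps (inv s \<otimes> x))"
        using anti x False by (simp add: sum_negf)
      finally show ?thesis by simp
    qed
    define N where "N = card (carrier G)"
    define v where "v = vec N (\<lambda>i. eps (idx i))"
    define A where "A = cay_adj_mat G S idx"
    have A: "A \<in> carrier_mat N N" by (simp add: A_def cay_adj_mat_def N_def)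
    have bij: "bij_betw idx {0..<N} (carrier G)" using assms(7) N_def by simp
    have Av: "A *\<^sub>v v = 0 \<cdot>\<^sub>v v"
    proof (rule eq_vecI)
      show "dim_vec (A *\<^sub>v v) = dim_vec (0 \<cdot>\<^sub>v v)" using A by (simp add: v_def)
      fix i assume "i < dim_vec (0 \<cdot>\<^sub>v v)"
      then have i: "i < N" by (simp add: v_def)
      define x where "x = idx i"
      have xc: "x \<in> carrier G" using bij i x_def bij_betwE by fastforce
      have "(A *\<^sub>v v) $ i = (\<Sum>j\<in>{0..<N}. (if cay_edge G S x (idx j) then 1 else 0) * eps (idx j))"
        using A i by (simp add: A_def cay_adj_mat_def N_def v_def x_def scalar_prod_def)
      also have "\<dots> = (\<Sum>y\<in>carrier G. (if cay_edge G S x y then 1 else 0) * eps y)"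
        by (rule sum.reindex_bij_betw[OF bij, where g = "\<lambda>y. (if cay_edge G S x y then 1 else 0) * eps y"])
      also have "\<dots> = (\<Sum>y\<in>carrier G. if cay_edge G S x y then eps y else 0)"
        by (intro sum.cong) auto
      also have "\<dots> = (\<Sum>y\<in>{y\<in>carrier G. cay_edge G S x y}. eps y)"
        using fin by (simp add: sum.inter_filter)
      also have "\<dots> = (\<Sum>s\<in>S. eps (inv s \<otimes> x))"
      proof (rule sum.reindex_bij_betw[symmetric])
        show "bij_betw (\<lambda>s. inv s \<otimes> x) S {y \<in> carrier G. cay_edge G S x y}"
        proof (rule bij_betw_byWitness[where f' = "\<lambda>y. x \<otimes> inv y"])
          show "\<forall>a\<in>S. x \<otimes> inv (inv a \<otimes> x) = a"
            using Scar xc by (auto simp: inv_mult_group m_assoc[symmetric])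
          show "\<forall>a\<in>{y \<in> carrier G. cay_edge G S x y}. inv (x \<otimes> inv a) \<otimes> x = a"
            using xc by (auto simp: inv_mult_group m_assoc cay_edge_def)
          show "(\<lambda>s. inv s \<otimes> x) ` S \<subseteq> {y \<in> carrier G. cay_edge G S x y}"
            using Scar xc by (auto simp: cay_edge_def inv_mult_group m_assoc[symmetric])
          show "(\<lambda>y. x \<otimes> inv y) ` {y \<in> carrier G. cay_edge G S x y} \<subseteq> S"
            by (auto simp: cay_edge_def)
        qed
      qed
      also have "\<dots> = 0" using sumzero[OF xc] .
      finally show "(A *\<^sub>v v) $ i = (0 \<cdot>\<^sub>v v) $ i" using i by (simp add: v_def)
    qed
    have vnz: "v \<noteq> 0\<^sub>v N"
    proof
      assume v0: "v = 0\<^sub>v N"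
      obtain i where i: "i < N" "idx i = \<one>" using bij one_closed
        by (metis atLeastLessThan_iff bij_betw_iff_bijections)
      have "v $ i = 1" using i one by (simp add: v_def eps_def lm_one)
      then show False using v0 i by simp
    qed
    have "eigenvector A v 0"
      unfolding eigenvector_def using A Av vnz by (simp add: v_def)
    then show False using assms(9) A_def eigenvalue_def by blast
  qed
  then obtain a where a: "a \<in> carrier G" "a \<notin> H" "a \<otimes> a = \<one>" "a \<noteq> \<one>" by blast
  have "H <#> {\<one>, a} = carrier G"
  proof
    show "H <#> {\<one>, a} \<subseteq> carrier G" using Hsub a by (auto simp: set_mult_def)
    show "carrier G \<subseteq> H <#> {\<one>, a}"
    proof
      fix g assume g: "g \<in> carrier G"
      show "g \<in> H <#> {\<one>, a}"
      proof (cases "g \<in> H")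
        case True
        then show ?thesis using g unfolding set_mult_def by (auto intro!: bexI[of _ g])
      next
        case False
        then have "g \<otimes> a \<in> H" using par g a by auto
        moreover have "g \<otimes> a \<otimes> a = g" using g a by (simp add: m_assoc)
        ultimately show ?thesis unfolding set_mult_def by (auto intro!: bexI[of _ "g \<otimes> a"])
      qed
    qed
  qed
  then show ?thesis using a nrm one by auto
qed

end

theorem proposition3p5:
  fixes G :: "('a, 'b) monoid_scheme" and S H :: "'a set" and n k :: nat and idx :: "nat \<Rightarrow> 'a"
  assumes "group G" and "finite (carrier G)"
    and "cayley_set G S"
    and "cayley_connected G S"
    and "cayley_bipartition G S H" and "\<one>\<^bsub>G\<^esub> \<in> H"
    and "card (carrier G) = 2 * n"
    and "card S = k"
    and "bij_betw idx {0..<card (carrier G)} (carrier G)"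
    and "\<not> 4 dvd n"
    and "\<not> eigenvalue (cay_adj_mat G S idx) 0"
  shows "\<exists>a \<in> carrier G - H. a \<otimes>\<^bsub>G\<^esub> a = \<one>\<^bsub>G\<^esub> \<and> a \<noteq> \<one>\<^bsub>G\<^esub>
           \<and> H \<lhd> G \<and> H \<inter> {\<one>\<^bsub>G\<^esub>, a} = {\<one>\<^bsub>G\<^esub>}
           \<and> H <#>\<^bsub>G\<^esub> {\<one>\<^bsub>G\<^esub>, a} = carrier G"
  using group.main_aux[OF assms(1,2,3,4,5,6,7,9,10,11)] .

end
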